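(* Let $(\mathtt{g},\sigma)$ be a magnetic system on a closed manifold $M$, let $s>0$ and $\Sigma_s=\{v\in TM:\|v\|=s\}$. Then for every $v\in\Sigma_s$ and all $\xi,\eta\in T_v\Sigma_s$, \[ \omega^\sigma(\xi,\eta)=\langle[\pi_*\xi]^\perp,K^\sigma(\eta)\rangle-\langle K^\sigma(\xi),[\pi_*\eta]^\perp\rangle . \] In particular, the restriction of $\omega^\sigma$ to $T_v\Sigma_s$ is degenerate, and its kernel is the line $\mathbb{R}X^{\mathtt{g},\sigma}_v$.
   Context: A magnetic system is a pair $(\mathtt{g},\sigma)$, $\mathtt{g}=\langle\cdot,\cdot\rangle$ a Riemannian metric, $\sigma$ a closed $2$-form; the Lorentz force $\Omega$ is the skew-adjoint endomorphism of $TM$ with $\sigma(v,w)=\langle v,\Omega(w)\rangle$. $\pi:TM\to M$ is the projection and $K:T(TM)\to TM$ is the Levi-Civita connector: if $Z(t)$ is a curve in $TM$ with $Z(0)=v$ and $\dot Z(0)=\xi$, then $K(\xi)=\frac{{\rm D}Z}{{\rm d}t}(0)$, the Levi-Civita covariant derivative of $Z$ along $\pi\circ Z$. The twisted symplectic form on $TM$ is $\omega^\sigma(\xi,\eta)=\langle\pi_*\xi,K(\eta)\rangle-\langle K(\xi),\pi_*\eta\rangle-\sigma(\pi_*\xi,\pi_*\eta)$. For a unit vector $u$ and $w\in T_{\pi(u)}M$ let $\widetilde\Omega_u(w)=\frac12\big(\langle\Omega(w),u\rangle u+\langle w,u\rangle\Omega(u)+\Omega(w)\big)$. For $\xi\in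 T_v(TM)$ with $v\in\Sigma_s$, the twisted connector is $K^\sigma(\xi)=K(\xi)-\widetilde\Omega_{v/s}(\pi_*\xi)$. For $v\in\Sigma_s$, $[\cdot]^\perp$ denotes orthogonal projection of $T_{\pi(v)}M$ onto $v^\perp$. $X^{\mathtt{g},\sigma}$ is the generator of the magnetic flow on $TM$, i.e. the vector field whose integral curves are $t\mapsto\dot\gamma(t)$ for curves $\gamma$ satisfying $\frac{{\rm D}\dot\gamma}{{\rm d}t}=\Omega(\dot\gamma)$; it is tangent to $\Sigma_s$. *)

theory Defs
  imports "HOL-Analysis.Analysis"
begin

(* Fibrewise model at a fixed v in TM with x = pi(v):
   'a  models T_x M with the Riemannian inner product g_x,
   'b  models T_v(TM), pis :: 'b => 'a models pi_* at v,
   K :: 'b => 'a models the Levi-Civita connector at v,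
   Om :: 'a => 'a models the Lorentz force at x. *)

text \<open>Twisted symplectic form, with sigma(a,b) = <a, Om b>.\<close>
definition omega_sig :: "('a::euclidean_space \<Rightarrow> 'a) \<Rightarrow> ('b \<Rightarrow> 'a) \<Rightarrow> ('b \<Rightarrow> 'a) \<Rightarrow> 'b \<Rightarrow> 'b \<Rightarrow> real" where
  "omega_sig Om pis K xi eta =
     inner (pis xi) (K eta) - inner (K xi) (pis eta) - inner (pis xi) (Om (pis eta))"

definition Omega_tilde :: "('a::euclidean_space \<Rightarrow> 'a) \<Rightarrow> 'a \<Rightarrow> 'a \<Rightarrow> 'a" where
  "Omega_tilde Om u w = (1/2) *\<^sub>R (inner (Om w) u *\<^sub>R u + inner w u *\<^sub>R Om u + Om w)"

definition K_sig :: "('a::euclidean_space \<Rightarrow> 'a) \<Rightarrow> ('b \<Rightarrow> 'a) \<Rightarrow> ('b \<Rightarrow> 'a) \<Rightarrow> real \<Rightarrow> 'a \<Rightarrow> 'b \<Rightarrow> 'a" where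
  "K_sig Om pis K s v xi = K xi - Omega_tilde Om ((1/s) *\<^sub>R v) (pis xi)"

definition perp :: "'a::euclidean_space \<Rightarrow> 'a \<Rightarrow> 'a" where
  "perp v w = w - (inner w v / inner v v) *\<^sub>R v"

text \<open>T_v Sigma_s: kernel of the differential of the norm function, d(|.|^2/2)(xi) = <v, K xi>.\<close>
definition TSigma :: "('b \<Rightarrow> 'a::euclidean_space) \<Rightarrow> 'a \<Rightarrow> 'b set" where
  "TSigma K v = {xi. inner v (K xi) = 0}"

end

theory Submission
  imports Defs
begin

lemma part1:
  fixes Om :: "'a::euclidean_space \<Rightarrow> 'a"
  assumes Om_lin: "linear Om"
    and Om_skew: "\<And>a b. inner a (Om b) = - inner (Om a) b"
    and s_pos: "s > 0" and v_norm: "norm v = s"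
    and hA: "inner v A = 0" and hB: "inner v B = 0"
  shows "inner a B - inner A b - inner a (Om b) =
   inner (perp v a) (B - Omega_tilde Om ((1/s) *\<^sub>R v) b)
   - inner (A - Omega_tilde Om ((1/s) *\<^sub>R v) a) (perp v b)"
proof -
  define u where "u = (1/s) *\<^sub>R v"
  have vv: "inner v v = s^2" using v_norm by (simp add: power2_norm_eq_inner[symmetric])
  have uu: "inner u u = 1" using vv s_pos by (simp add: u_def power2_eq_square)
  have uA: "inner u A = 0" and uB: "inner u B = 0" using hA hB by (simp_all add: u_def)
  have pw: "perp v w = w - inner w u *\<^sub>R u" for w
    using s_pos vv by (simp add: perp_def u_def power2_eq_square)
  have sk: "inner x (Om y) = - inner y (Om x)" for x y
    using Om_skew[of x y] by (simp add: inner_commute)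
  have uOu: "inner u (Om u) = 0" using sk[of u u] by simp
  have Ot: "Omega_tilde Om u w = (1/2) *\<^sub>R (inner (Om w) u *\<^sub>R u + inner w u *\<^sub>R Om u + Om w)" for w
    by (simp add: Omega_tilde_def)
  have F1: "inner (perp v a) (Omega_tilde Om u b) = (1/2) * (inner b u * inner a (Om u) + inner a (Om b) - inner a u * inner u (Om b))"
    unfolding pw Ot
    by (simp add: inner_add_right inner_diff_left uu uOu inner_commute[of "Om b" u] algebra_simps)
  have F2: "inner (Omega_tilde Om u a) (perp v b) = (1/2) * (inner a u * inner b (Om u) + inner b (Om a) - inner b u * inner u (Om a))"
    unfolding pw Ot
    by (simp add: inner_add_left inner_diff_right uu inner_commute[of "Om u" u] uOu inner_commute[of "Om a" u] inner_commute[of "Om a" b] inner_commute[of "Om u" b] inner_commute[of u b] algebra_simps)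
  have G1: "inner (perp v a) B = inner a B" unfolding pw by (simp add: inner_diff_left uB)
  have G2: "inner A (perp v b) = inner A b" unfolding pw by (simp add: inner_diff_right uA inner_commute[of A])
  have S: "inner u (Om a) = - inner a (Om u)" "inner u (Om b) = - inner b (Om u)" "inner b (Om a) = - inner a (Om b)"
    using sk[of u a] sk[of u b] sk[of b a] by auto
  show ?thesis
    unfolding u_def[symmetric]
    by (simp add: inner_diff_left inner_diff_right F1 F2 G1 G2 S algebra_simps)
qed

theorem lemma4p1:
  fixes Om :: "'a::euclidean_space \<Rightarrow> 'a"
    and pis K :: "'b::real_vector \<Rightarrow> 'a"
    and v :: 'a and s :: real and X :: 'b
  assumes Om_lin: "linear Om"
    and Om_skew: "\<And>a b. inner a (Om b) = - inner (Om a) b"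
    and pis_lin: "linear pis" and K_lin: "linear K"
    and split: "bij (\<lambda>xi. (pis xi, K xi))"
    and s_pos: "s > 0" and v_norm: "norm v = s"
    and X_pi: "pis X = v" and X_K: "K X = Om v"
  shows "(\<forall>xi\<in>TSigma K v. \<forall>eta\<in>TSigma K v.
           omega_sig Om pis K xi eta =
             inner (perp v (pis xi)) (K_sig Om pis K s v eta)
             - inner (K_sig Om pis K s v xi) (perp v (pis eta)))
       \<and> (\<exists>xi\<in>TSigma K v. xi \<noteq> 0 \<and> (\<forall>eta\<in>TSigma K v. omega_sig Om pis K xi eta = 0))
       \<and> {xi\<in>TSigma K v. \<forall>eta\<in>TSigma K v. omega_sig Om pis K xi eta = 0}
           = range (\<lambda>c. c *\<^sub>R X)"
proof -
  have v0: "v \<noteq> 0" using s_pos v_norm by auto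
  have vv: "inner v v \<noteq> 0" using v0 by simp
  have P1: "\<forall>xi\<in>TSigma K v. \<forall>eta\<in>TSigma K v.
           omega_sig Om pis K xi eta =
             inner (perp v (pis xi)) (K_sig Om pis K s v eta)
             - inner (K_sig Om pis K s v xi) (perp v (pis eta))"
  proof (intro ballI)
    fix xi eta assume "xi \<in> TSigma K v" "eta \<in> TSigma K v"
    then have "inner v (K xi) = 0" "inner v (K eta) = 0" by (auto simp: TSigma_def)
    from part1[OF Om_lin Om_skew s_pos v_norm this, of "pis xi" "pis eta"]
    show "omega_sig Om pis K xi eta =
             inner (perp v (pis xi)) (K_sig Om pis K s v eta)
             - inner (K_sig Om pis K s v xi) (perp v (pis eta))"
      by (simp add: omega_sig_def K_sig_def inner_diff_left inner_diff_right)
  qed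
  have vOv: "inner v (Om v) = 0" using Om_skew[of v v] by (simp add: inner_commute)
  have XT: "X \<in> TSigma K v" using vOv X_K by (simp add: TSigma_def)
  have Xne: "X \<noteq> 0"
  proof
    assume "X = 0" then have "pis X = 0" using pis_lin by (simp add: linear_0)
    then show False using X_pi v0 by simp
  qed
  have omX: "omega_sig Om pis K X eta = 0" if "eta \<in> TSigma K v" for eta
    using that Om_skew[of v "pis eta"] by (simp add: omega_sig_def TSigma_def X_pi X_K inner_commute)
  have om_c: "omega_sig Om pis K (c *\<^sub>R X) eta = 0" if "eta \<in> TSigma K v" for eta c
  proof -
    have "omega_sig Om pis K (c *\<^sub>R X) eta = c * omega_sig Om pis K X eta"
      using pis_lin K_lin by (simp add: omega_sig_def linear_scale algebra_simps)
    then show ?thesis using omX[OF that] by simp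
  qed
  have surjP: "\<exists>eta. pis eta = b \<and> K eta = B" for b B
  proof -
    from split have "surj (\<lambda>xi. (pis xi, K xi))" by (rule bij_is_surj)
    from surjD[OF this, of "(b, B)"] obtain eta where "(b, B) = (pis eta, K eta)" by blast
    then show ?thesis by auto
  qed
  have injP: "inj (\<lambda>xi. (pis xi, K xi))" using split by (rule bij_is_inj)
  have ker: "xi \<in> range (\<lambda>c. c *\<^sub>R X)" if xiT: "xi \<in> TSigma K v" and xik: "\<forall>eta\<in>TSigma K v. omega_sig Om pis K xi eta = 0" for xi
  proof -
    define a where "a = pis xi"
    define A where "A = K xi"
    have om_eq: "omega_sig Om pis K xi eta = inner a (K eta) - inner (A - Om a) (pis eta)" for eta
      using Om_skew[of a "pis eta"] by (simp add: omega_sig_def a_def A_def inner_diff_left)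
    obtain e1 where e1: "pis e1 = A - Om a" "K e1 = 0" using surjP by blast
    have "e1 \<in> TSigma K v" using e1 by (simp add: TSigma_def)
    then have "inner (A - Om a) (A - Om a) = 0" using xik om_eq[of e1] e1 by simp
    then have AO: "A = Om a" by simp
    obtain e2 where e2: "pis e2 = 0" "K e2 = perp v a" using surjP by blast
    have "inner v (perp v a) = 0" using vv by (simp add: perp_def inner_diff_right inner_commute)
    then have "e2 \<in> TSigma K v" using e2 by (simp add: TSigma_def)
    then have ia: "inner a (perp v a) = 0" using xik om_eq[of e2] e2 by simp
    have "inner (perp v a) (perp v a) = inner a (perp v a)"
      using \<open>inner v (perp v a) = 0\<close> by (simp add: perp_def[of v a] inner_diff_left)
    then have "perp v a = 0" using ia by simp
    define c where "c = inner a v / inner v v"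
    have aeq: "a = c *\<^sub>R v" using \<open>perp v a = 0\<close> unfolding c_def perp_def by simp
    have "pis (xi - c *\<^sub>R X) = pis xi - c *\<^sub>R pis X" using pis_lin
      by (simp add: linear_diff linear_scale)
    then have "pis (xi - c *\<^sub>R X) = 0" using aeq X_pi unfolding a_def by simp
    moreover have "K (xi - c *\<^sub>R X) = 0"
    proof -
      have "K (xi - c *\<^sub>R X) = A - c *\<^sub>R Om v" using K_lin X_K by (simp add: linear_diff linear_scale A_def)
      also have "\<dots> = Om a - Om (c *\<^sub>R v)" using AO Om_lin by (simp add: linear_scale)
      also have "\<dots> = 0" using aeq by simp
      finally show ?thesis .
    qed
    ultimately have "(pis (xi - c *\<^sub>R X), K (xi - c *\<^sub>R X)) = (pis 0, K 0)"
      using pis_lin K_lin by (simp add: linear_0)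
    then have "xi - c *\<^sub>R X = 0" using injP by (auto dest: injD)
    then show ?thesis by auto
  qed
  show ?thesis
  proof (intro conjI)
    show "\<exists>xi\<in>TSigma K v. xi \<noteq> 0 \<and> (\<forall>eta\<in>TSigma K v. omega_sig Om pis K xi eta = 0)"
      using XT Xne omX by blast
    show "{xi\<in>TSigma K v. \<forall>eta\<in>TSigma K v. omega_sig Om pis K xi eta = 0} = range (\<lambda>c. c *\<^sub>R X)"
    proof
      show "{xi\<in>TSigma K v. \<forall>eta\<in>TSigma K v. omega_sig Om pis K xi eta = 0} \<subseteq> range (\<lambda>c. c *\<^sub>R X)"
        using ker by blast
      show "range (\<lambda>c. c *\<^sub>R X) \<subseteq> {xi\<in>TSigma K v. \<forall>eta\<in>TSigma K v. omega_sig Om pis K xi eta = 0}"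
      proof
        fix y assume "y \<in> range (\<lambda>c. c *\<^sub>R X)"
        then obtain c where y: "y = c *\<^sub>R X" by auto
        have "y \<in> TSigma K v" using XT K_lin y by (simp add: TSigma_def linear_scale)
        then show "y \<in> {xi\<in>TSigma K v. \<forall>eta\<in>TSigma K v. omega_sig Om pis K xi eta = 0}"
          using om_c y by blast
      qed
    qed
  qed (rule P1)
qed

end
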